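(* Let $T\in\mathcal{BC}(X)$ and $s,p\in\rho_S(T)$ with $s\notin[p]$. Write $Q_s:=\mathcal Q_{c,s}(T)^{-1}$, $Q_p:=\mathcal Q_{c,p}(T)^{-1}$ and $s_0=\Re(s)$. Then $$sQ_sQ_pp-sQ_s\bar TQ_p-Q_s\bar TQ_pp+Q_s\bar T^2Q_p$$ $$=\big[(sQ_s-pQ_p)p-\bar s(sQ_s-pQ_p)\big](p^2-2s_0p+|s|^2)^{-1}+\big[(\bar TQ_p-Q_s\bar T)p-\bar s(\bar TQ_p-Q_s\bar T)\big](p^2-2s_0p+|s|^2)^{-1}.$$
   Context: $\mathbb H$ denotes the quaternions with units $e_1,e_2,e_3$; $\bar s$ is the conjugate of $s$; $[p]=\{\Re(p)+J|\underline p|:J\in\mathbb S\}$, $\mathbb S$ the unit purely imaginary quaternions. $X=X_{\mathbb R}\otimes\mathbb H$ is a two-sided quaternionic Banach module over a real Banach space $X_{\mathbb R}$; $\mathcal{BC}(X)$ is the set of $T=T_0+T_1e_1+T_2e_2+T_3e_3$ with $T_i\in\mathcal B(X_{\mathbb R})$ pairwise commuting; $\bar T=T_0-\sum_{i=1}^3T_ie_i$; $\mathcal Q_{c,s}(T)=s^2\mathcal I-s(T+\bar T)+T\bar T$; $\rho_S(T)$ is the set of $s\in\mathbb H$ for which $\mathcal Q_{c,s}(T)$ has a bounded inverse. *)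

theory Defs
  imports "HOL-Analysis.Analysis" "HOL-Library.Function_Algebras"
begin

datatype quat = Quat (qre: real) (qi1: real) (qi2: real) (qi3: real)

lemma quat_eq_iff: "a = b \<longleftrightarrow> qre a = qre b \<and> qi1 a = qi1 b \<and> qi2 a = qi2 b \<and> qi3 a = qi3 b"
  by (cases a; cases b) auto

instantiation quat :: ring_1
begin
definition "0 = Quat 0 0 0 0"
definition "1 = Quat 1 0 0 0"
definition "a + b = Quat (qre a + qre b) (qi1 a + qi1 b) (qi2 a + qi2 b) (qi3 a + qi3 b)"
definition "a - b = Quat (qre a - qre b) (qi1 a - qi1 b) (qi2 a - qi2 b) (qi3 a - qi3 b)"
definition "- a = Quat (- qre a) (- qi1 a) (- qi2 a) (- qi3 a)"
definition "a * b = Quat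
   (qre a * qre b - qi1 a * qi1 b - qi2 a * qi2 b - qi3 a * qi3 b)
   (qre a * qi1 b + qi1 a * qre b + qi2 a * qi3 b - qi3 a * qi2 b)
   (qre a * qi2 b - qi1 a * qi3 b + qi2 a * qre b + qi3 a * qi1 b)
   (qre a * qi3 b + qi1 a * qi2 b - qi2 a * qi1 b + qi3 a * qre b)"
instance
  by standard (auto simp: quat_eq_iff zero_quat_def one_quat_def plus_quat_def minus_quat_def
      uminus_quat_def times_quat_def algebra_simps)
end

instantiation quat :: real_vector
begin
definition "scaleR r a = Quat (r * qre a) (r * qi1 a) (r * qi2 a) (r * qi3 a)"
instance
  by standard (auto simp: quat_eq_iff scaleR_quat_def zero_quat_def plus_quat_def minus_quat_def
      uminus_quat_def algebra_simps)
end

instance quat :: real_algebra_1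
  by standard (auto simp: quat_eq_iff scaleR_quat_def times_quat_def one_quat_def algebra_simps)

definition qcnj :: "quat \<Rightarrow> quat" where
  "qcnj a = Quat (qre a) (- qi1 a) (- qi2 a) (- qi3 a)"

definition qabs :: "quat \<Rightarrow> real" where
  "qabs a = sqrt ((qre a)\<^sup>2 + (qi1 a)\<^sup>2 + (qi2 a)\<^sup>2 + (qi3 a)\<^sup>2)"

definition qimabs :: "quat \<Rightarrow> real" where
  "qimabs a = sqrt ((qi1 a)\<^sup>2 + (qi2 a)\<^sup>2 + (qi3 a)\<^sup>2)"

instantiation quat :: inverse
begin
definition "inverse a = scaleR (inverse ((qabs a)\<^sup>2)) (qcnj a)"
definition "a div b = a * inverse (b::quat)"
instance ..
end

definition qS :: "quat set" where
  "qS = {J. qre J = 0 \<and> qabs J = 1}"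

definition qsphere :: "quat \<Rightarrow> quat set" where
  "qsphere p = {of_real (qre p) + of_real (qimabs p) * J | J. J \<in> qS}"

text \<open>An element x = x0 + x1 e1 + x2 e2 + x3 e3 of X = X_R \<otimes> H is represented
  by its four components in X_R.\<close>

type_synonym 'a qvec = "'a \<times> 'a \<times> 'a \<times> 'a"

definition lmul :: "quat \<Rightarrow> 'a::real_vector qvec \<Rightarrow> 'a qvec" where
  "lmul a = (\<lambda>(x0, x1, x2, x3).
     (qre a *\<^sub>R x0 - qi1 a *\<^sub>R x1 - qi2 a *\<^sub>R x2 - qi3 a *\<^sub>R x3,
      qre a *\<^sub>R x1 + qi1 a *\<^sub>R x0 + qi2 a *\<^sub>R x3 - qi3 a *\<^sub>R x2,
      qre a *\<^sub>R x2 - qi1 a *\<^sub>R x3 + qi2 a *\<^sub>R x0 + qi3 a *\<^sub>R x1,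
      qre a *\<^sub>R x3 + qi1 a *\<^sub>R x2 - qi2 a *\<^sub>R x1 + qi3 a *\<^sub>R x0))"

text \<open>The operator T = T0 + T1 e1 + T2 e2 + T3 e3 acting on X by
  T(sum_j x_j e_j) = sum_{i,j} T_i(x_j) e_i e_j.\<close>
definition qop :: "('a::real_normed_vector \<Rightarrow>\<^sub>L 'a) \<Rightarrow> ('a \<Rightarrow>\<^sub>L 'a) \<Rightarrow> ('a \<Rightarrow>\<^sub>L 'a) \<Rightarrow> ('a \<Rightarrow>\<^sub>L 'a)
    \<Rightarrow> 'a qvec \<Rightarrow> 'a qvec" where
  "qop T0 T1 T2 T3 = (\<lambda>(x0, x1, x2, x3).
     (T0 x0 - T1 x1 - T2 x2 - T3 x3,
      T0 x1 + T1 x0 + T2 x3 - T3 x2,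
      T0 x2 - T1 x3 + T2 x0 + T3 x1,
      T0 x3 + T1 x2 - T2 x1 + T3 x0))"

definition BC :: "('a::real_normed_vector \<Rightarrow>\<^sub>L 'a) \<Rightarrow> ('a \<Rightarrow>\<^sub>L 'a) \<Rightarrow> ('a \<Rightarrow>\<^sub>L 'a) \<Rightarrow> ('a \<Rightarrow>\<^sub>L 'a) \<Rightarrow> bool" where
  "BC T0 T1 T2 T3 \<longleftrightarrow> (\<forall>A\<in>{T0, T1, T2, T3}. \<forall>B\<in>{T0, T1, T2, T3}. A o\<^sub>L B = B o\<^sub>L A)"

text \<open>Q_{c,s}(T) = s^2 I - s (T + Tbar) + T Tbar, with Tbar = T0 - T1 e1 - T2 e2 - T3 e3.\<close>
definition Qcs :: "('a::real_normed_vector \<Rightarrow>\<^sub>L 'a) \<Rightarrow> ('a \<Rightarrow>\<^sub>L 'a) \<Rightarrow> ('a \<Rightarrow>\<^sub>L 'a) \<Rightarrow> ('a \<Rightarrow>\<^sub>L 'a)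
    \<Rightarrow> quat \<Rightarrow> 'a qvec \<Rightarrow> 'a qvec" where
  "Qcs T0 T1 T2 T3 s =
     lmul (s * s) - (lmul s \<circ> (qop T0 T1 T2 T3 + qop T0 (- T1) (- T2) (- T3)))
     + (qop T0 T1 T2 T3 \<circ> qop T0 (- T1) (- T2) (- T3))"

definition rhoS :: "('a::real_normed_vector \<Rightarrow>\<^sub>L 'a) \<Rightarrow> ('a \<Rightarrow>\<^sub>L 'a) \<Rightarrow> ('a \<Rightarrow>\<^sub>L 'a) \<Rightarrow> ('a \<Rightarrow>\<^sub>L 'a)
    \<Rightarrow> quat set" where
  "rhoS T0 T1 T2 T3 = {s. \<exists>B. bounded_linear B \<and> B \<circ> Qcs T0 T1 T2 T3 s = id
                                               \<and> Qcs T0 T1 T2 T3 s \<circ> B = id}"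

end

theory Submission
  imports Defs
begin


lemma lin_add: "linear f \<Longrightarrow> linear g \<Longrightarrow> linear (\<lambda>x. f x + g x)"
  unfolding linear_iff by (simp add: real_vector.linear_add real_vector.linear_scale algebra_simps)
lemma lin_diff: "linear f \<Longrightarrow> linear g \<Longrightarrow> linear (\<lambda>x. f x - g x)"
  unfolding linear_iff by (simp add: real_vector.linear_diff real_vector.linear_scale algebra_simps)
lemma lin_neg: "linear f \<Longrightarrow> linear (\<lambda>x. - f x)"
  unfolding linear_iff by (simp add: real_vector.linear_add real_vector.linear_scale algebra_simps)
lemma lin_zero: "linear (\<lambda>x. 0)" unfolding linear_iff by simp
lemma lin_idf: "linear (\<lambda>x. x)" unfolding linear_iff by simp

typedef (overloaded) 'v lop = "{f :: 'v::real_vector \<Rightarrow> 'v. linear f}"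
  morphisms rep abs
  by (rule exI[of _ "\<lambda>x. x"]) (simp add: lin_idf)

lemma rep_lin: "linear (rep a)" using rep by auto
lemma rep_abs: "linear f \<Longrightarrow> rep (abs f) = f" by (simp add: abs_inverse)
lemma lop_eq: "a = b \<longleftrightarrow> rep a = rep b" by (simp add: rep_inject)

instantiation lop :: (real_vector) "{ring, monoid_mult}"
begin
definition "0 = abs (\<lambda>x. 0)"
definition "1 = abs (\<lambda>x. x)"
definition "a + b = abs (\<lambda>x. rep a x + rep b x)"
definition "a - b = abs (\<lambda>x. rep a x - rep b x)"
definition "- a = abs (\<lambda>x. - rep a x)"
definition "a * b = abs (rep a \<circ> rep b)"

lemma rep_0: "rep (0::_ lop) = (\<lambda>x. 0)" by (simp add: zero_lop_def rep_abs lin_zero)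
lemma rep_1: "rep (1::_ lop) = (\<lambda>x. x)" by (simp add: one_lop_def rep_abs lin_idf)
lemma rep_plus: "rep (a + b) = (\<lambda>x. rep a x + rep b x)"
  by (simp add: plus_lop_def rep_abs lin_add rep_lin)
lemma rep_minus: "rep (a - b) = (\<lambda>x. rep a x - rep b x)"
  by (simp add: minus_lop_def rep_abs lin_diff rep_lin)
lemma rep_uminus: "rep (- a) = (\<lambda>x. - rep a x)"
  by (simp add: uminus_lop_def rep_abs lin_neg rep_lin)
lemma rep_times: "rep (a * b) = rep a \<circ> rep b"
  by (simp add: times_lop_def rep_abs linear_compose rep_lin)

instance
  by standard (auto simp: lop_eq rep_0 rep_1 rep_plus rep_minus rep_uminus rep_times
      real_vector.linear_add real_vector.linear_diff real_vector.linear_0 rep_lin algebra_simps)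
end

lemma rep_plus': "rep (a + b) = rep a + rep b" by (simp add: rep_plus plus_fun_def)
lemma rep_minus': "rep (a - b) = rep a - rep b" by (simp add: rep_minus fun_diff_def)


lemma ring_id:
  fixes S P Sc t Tm Qs Qp Qi c2 cn K Kp :: "'r::{ring,monoid_mult}"
  assumes QK: "Qs*K = 1" "K*Qs = 1" and QKp: "Qp*Kp = 1" "Kp*Qp = 1"
    and K: "K = S*S - S*(Tm+t) + Tm*t" and Kp: "Kp = P*P - P*(Tm+t) + Tm*t"
    and cS: "S*(Tm+t) = (Tm+t)*S" "S*(Tm*t) = (Tm*t)*S"
    and cP: "P*(Tm+t) = (Tm+t)*P" "P*(Tm*t) = (Tm*t)*P"
    and ct: "Tm*t = t*Tm"
    and sc: "Sc + S = c2" "Sc*S = cn"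
    and cen: "\<And>x. c2*x = x*c2" "\<And>x. cn*x = x*cn"
    and qi: "(P*P - c2*P + cn)*Qi = 1"
  shows "S*Qs*Qp*P - S*Qs*t*Qp - Qs*t*Qp*P + Qs*t*t*Qp
     = ((S*Qs - P*Qp)*P - Sc*(S*Qs - P*Qp))*Qi + ((t*Qp - Qs*t)*P - Sc*(t*Qp - Qs*t))*Qi"
proof -
  have SK: "S*K = K*S"
  proof -
    have "S*(S*(Tm+t)) = S*(Tm+t)*S" by (metis cS(1) mult.assoc)
    then show ?thesis unfolding K using cS(2) by (simp add: algebra_simps mult.assoc)
  qed
  have PK: "P*Kp = Kp*P"
  proof -
    have "P*(P*(Tm+t)) = P*(Tm+t)*P" by (metis cP(1) mult.assoc)
    then show ?thesis unfolding Kp using cP(2) by (simp add: algebra_simps mult.assoc)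
  qed
  have SQ: "S*Qs = Qs*S"
  proof -
    have "Qs*S = Qs*S*(K*Qs)" using QK by simp
    also have "\<dots> = Qs*(S*K)*Qs" by (simp add: mult.assoc)
    also have "\<dots> = (Qs*K)*S*Qs" by (simp add: SK mult.assoc)
    finally show ?thesis using QK by simp
  qed
  have PQ: "P*Qp = Qp*P"
  proof -
    have "Qp*P = Qp*P*(Kp*Qp)" using QKp by simp
    also have "\<dots> = Qp*(P*Kp)*Qp" by (simp add: mult.assoc)
    also have "\<dots> = (Qp*Kp)*P*Qp" by (simp add: PK mult.assoc)
    finally show ?thesis using QKp by simp
  qed
  define F where "F = Qs*(S - t)"
  define G where "G = (P - t)*Qp"
  have R1: "S*F - F*Tm = 1"
  proof -
    have a: "S*F = Qs*(S*S - S*t)" by (simp add: F_def mult.assoc[symmetric] SQ right_diff_distrib)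
    have b: "F*Tm = Qs*(S*Tm - t*Tm)" by (simp add: F_def mult.assoc left_diff_distrib)
    have "S*F - F*Tm = Qs*(S*S - S*t - S*Tm + t*Tm)"
      unfolding a b by (simp add: algebra_simps)
    also have "\<dots> = Qs*K" unfolding K using ct by (simp add: algebra_simps)
    finally show ?thesis using QK by simp
  qed
  have R2: "G*P - Tm*G = 1"
  proof -
    have "G*P - Tm*G = (P*P - t*P - Tm*P + Tm*t)*Qp"
    proof -
      have "G*P = (P-t)*P*Qp" by (simp add: G_def mult.assoc PQ)
      then show ?thesis unfolding G_def by (simp add: algebra_simps)
    qed
    also have "\<dots> = Kp*Qp" unfolding Kp using cP by (simp add: algebra_simps)
    finally show ?thesis using QKp by simp
  qed
  define B where "B = F*G"
  have "F*Tm*G = (S*F - 1)*G" using R1 by (simp add: algebra_simps)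
  then have h1: "S*B = F*Tm*G + G" unfolding B_def by (simp add: algebra_simps)
  have "F*Tm*G = F*(G*P - 1)" using R2 by (simp add: algebra_simps)
  then have h2: "B*P = F*Tm*G + F" unfolding B_def by (simp add: algebra_simps)
  have BP: "B*P - S*B = F - G" unfolding h1 h2 by simp
  have "(F - G)*P - Sc*(F - G) = B*P*P - (Sc + S)*B*P + (Sc*S)*B"
    unfolding BP[symmetric] by (simp add: algebra_simps)
  also have "\<dots> = B*P*P - (c2*B)*P + cn*B" unfolding sc ..
  also have "\<dots> = B*P*P - (B*c2)*P + B*cn" unfolding cen[of B] ..
  also have "\<dots> = B*(P*P - c2*P + cn)" by (simp add: algebra_simps)
  finally have Bq: "B = ((F - G)*P - Sc*(F - G))*Qi" using qi
    by (metis mult.assoc mult_1_right)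
  have L0: "B = Qs*S*P*Qp - Qs*S*t*Qp - Qs*t*P*Qp + Qs*t*t*Qp"
    by (simp add: B_def F_def G_def algebra_simps)
  have e1: "Qs*S*P*Qp = S*Qs*Qp*P" by (metis SQ PQ mult.assoc)
  have e2: "Qs*S*t*Qp = S*Qs*t*Qp" by (metis SQ)
  have e3: "Qs*t*P*Qp = Qs*t*Qp*P" by (metis PQ mult.assoc)
  have L: "S*Qs*Qp*P - S*Qs*t*Qp - Qs*t*Qp*P + Qs*t*t*Qp = B"
    unfolding L0 e1 e2 e3 ..
  have FG: "F - G = (S*Qs - P*Qp) + (t*Qp - Qs*t)"
    unfolding F_def G_def by (simp add: algebra_simps SQ)
  show ?thesis unfolding L Bq FG by (simp add: algebra_simps)
qed


lemma of_real_quat: "(of_real r :: quat) = Quat r 0 0 0"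
  by (simp add: of_real_def scaleR_quat_def one_quat_def)

lemma lmul_mult: "lmul (a * b) = lmul a \<circ> lmul (b::quat)"
  by (rule ext) (auto simp: lmul_def times_quat_def split_beta algebra_simps)

lemma lmul_add: "lmul (a + b) = (\<lambda>x. lmul a x + lmul (b::quat) x)"
  by (rule ext) (auto simp: lmul_def plus_quat_def split_beta algebra_simps)

lemma lmul_diff: "lmul (a - b) = (\<lambda>x. lmul a x - lmul (b::quat) x)"
  by (rule ext) (auto simp: lmul_def minus_quat_def split_beta algebra_simps)

lemma lmul_of_real: "lmul (of_real r) = (\<lambda>x. r *\<^sub>R x)"
  by (rule ext) (auto simp: lmul_def of_real_quat split_beta)

lemma lmul_one: "lmul 1 = (\<lambda>x. x)"
  using lmul_of_real[of 1] by simp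

lemma lmul_linear: "linear (lmul q)"
  unfolding linear_iff by (auto simp: lmul_def split_beta algebra_simps)

lemma qop_linear: "linear (qop A B C D)"
  unfolding linear_iff by (auto simp: qop_def split_beta algebra_simps blinfun.add_right blinfun.diff_right blinfun.scaleR_right)

lemma cnj_add: "qcnj s + s = of_real (2 * qre s)"
  by (simp add: quat_eq_iff qcnj_def plus_quat_def of_real_quat)

lemma cnj_mult: "qcnj s * s = of_real ((qabs s)\<^sup>2)"
  by (simp add: quat_eq_iff qcnj_def times_quat_def of_real_quat qabs_def power2_eq_square algebra_simps)

lemma quat_right_inverse: "q \<noteq> 0 \<Longrightarrow> q * inverse q = (1::quat)"
proof -
  assume "q \<noteq> 0"
  define N where "N = (qre q)\<^sup>2 + (qi1 q)\<^sup>2 + (qi2 q)\<^sup>2 + (qi3 q)\<^sup>2"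
  from \<open>q \<noteq> 0\<close> have nz: "N \<noteq> 0"
    by (auto simp: quat_eq_iff zero_quat_def add_nonneg_eq_0_iff N_def)
  have "(qabs q)\<^sup>2 = N"
    unfolding qabs_def N_def by simp
  then have inv: "inverse q = Quat (qre q / N) (- qi1 q / N) (- qi2 q / N) (- qi3 q / N)"
    by (simp add: inverse_quat_def scaleR_quat_def qcnj_def divide_inverse)
  have r: "qre q * (qre q / N) - qi1 q * (- qi1 q / N) - qi2 q * (- qi2 q / N) - qi3 q * (- qi3 q / N) = N * inverse N"
    unfolding N_def by (simp add: divide_inverse power2_eq_square algebra_simps)
  have i1: "qre q * (- qi1 q / N) + qi1 q * (qre q / N) + qi2 q * (- qi3 q / N) - qi3 q * (- qi2 q / N) = 0"
    by (simp add: divide_inverse algebra_simps)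
  have i2: "qre q * (- qi2 q / N) - qi1 q * (- qi3 q / N) + qi2 q * (qre q / N) + qi3 q * (- qi1 q / N) = 0"
    by (simp add: divide_inverse algebra_simps)
  have i3: "qre q * (- qi3 q / N) + qi1 q * (- qi2 q / N) - qi2 q * (- qi1 q / N) + qi3 q * (qre q / N) = 0"
    by (simp add: divide_inverse algebra_simps)
  show ?thesis unfolding inv quat_eq_iff times_quat_def one_quat_def quat.sel
    using r i1 i2 i3 nz by simp
qed



lemma lmul_diag: "lmul q \<circ> qop A 0 0 0 = qop A 0 0 0 \<circ> lmul q"
  by (rule ext) (auto simp: lmul_def qop_def split_beta blinfun.add_right blinfun.diff_right blinfun.scaleR_right)

lemma qop_sum: "qop T0 T1 T2 T3 + qop T0 (- T1) (- T2) (- T3) = qop (T0 + T0) 0 0 0"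
  by (rule ext) (auto simp: qop_def split_beta plus_fun_def blinfun.add_left uminus_blinfun.rep_eq)

lemma qop_prod:
  assumes "BC T0 T1 T2 T3"
  shows "qop T0 T1 T2 T3 \<circ> qop T0 (- T1) (- T2) (- T3)
           = qop ((T0 o\<^sub>L T0) + (T1 o\<^sub>L T1) + (T2 o\<^sub>L T2) + (T3 o\<^sub>L T3)) 0 0 0"
    and "qop T0 (- T1) (- T2) (- T3) \<circ> qop T0 T1 T2 T3
           = qop ((T0 o\<^sub>L T0) + (T1 o\<^sub>L T1) + (T2 o\<^sub>L T2) + (T3 o\<^sub>L T3)) 0 0 0"
proof -
  have c: "\<And>A B x. A \<in> {T0, T1, T2, T3} \<Longrightarrow> B \<in> {T0, T1, T2, T3} \<Longrightarrow> A (B x) = B (A x)"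
    using assms unfolding BC_def by (metis blinfun_apply_blinfun_compose)
  have c01: "\<And>x. T1 (T0 x) = T0 (T1 x)" and c02: "\<And>x. T2 (T0 x) = T0 (T2 x)"
    and c03: "\<And>x. T3 (T0 x) = T0 (T3 x)" and c12: "\<And>x. T2 (T1 x) = T1 (T2 x)"
    and c13: "\<And>x. T3 (T1 x) = T1 (T3 x)" and c23: "\<And>x. T3 (T2 x) = T2 (T3 x)"
    using c by auto
  show "qop T0 T1 T2 T3 \<circ> qop T0 (- T1) (- T2) (- T3)
           = qop ((T0 o\<^sub>L T0) + (T1 o\<^sub>L T1) + (T2 o\<^sub>L T2) + (T3 o\<^sub>L T3)) 0 0 0"
    by (rule ext) (auto simp: qop_def split_beta blinfun.add_left uminus_blinfun.rep_eq blinfun.minus_left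
        blinfun.add_right blinfun.diff_right blinfun.minus_right c01 c02 c03 c12 c13 c23 algebra_simps)
  show "qop T0 (- T1) (- T2) (- T3) \<circ> qop T0 T1 T2 T3
           = qop ((T0 o\<^sub>L T0) + (T1 o\<^sub>L T1) + (T2 o\<^sub>L T2) + (T3 o\<^sub>L T3)) 0 0 0"
    by (rule ext) (auto simp: qop_def split_beta blinfun.add_left uminus_blinfun.rep_eq blinfun.minus_left
        blinfun.add_right blinfun.diff_right blinfun.minus_right c01 c02 c03 c12 c13 c23 algebra_simps)
qed


lemma sphere_lemma:
  assumes "p*p - of_real (2*qre s)*p + of_real ((qabs s)\<^sup>2) = 0"
  shows "s \<in> qsphere p"
proof -
  obtain a b c d where p: "p = Quat a b c d" by (cases p)
  obtain x y z w where s: "s = Quat x y z w" by (cases s)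
  have sq: "(qabs s)\<^sup>2 = x\<^sup>2 + y\<^sup>2 + z\<^sup>2 + w\<^sup>2" by (simp add: qabs_def s)
  from assms have e0: "a*a - b*b - c*c - d*d - 2*x*a + (x\<^sup>2 + y\<^sup>2 + z\<^sup>2 + w\<^sup>2) = 0"
    and e1: "(a - x) * b = 0" and e2: "(a - x) * c = 0" and e3: "(a - x) * d = 0"
    unfolding sq unfolding p s by (simp_all add: quat_eq_iff times_quat_def of_real_quat minus_quat_def
        plus_quat_def zero_quat_def algebra_simps)
  have ax: "a = x"
  proof (rule ccontr)
    assume "a \<noteq> x"
    with e1 e2 e3 have "b = 0" "c = 0" "d = 0" by auto
    with e0 have "(a - x)\<^sup>2 + (y\<^sup>2 + z\<^sup>2 + w\<^sup>2) = 0" by (simp add: power2_eq_square algebra_simps)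
    then have "(a - x)\<^sup>2 = 0" by (smt (verit) zero_le_power2)
    with \<open>a \<noteq> x\<close> show False by simp
  qed
  with e0 have bv: "b\<^sup>2 + c\<^sup>2 + d\<^sup>2 = y\<^sup>2 + z\<^sup>2 + w\<^sup>2" by (simp add: power2_eq_square algebra_simps)
  define r where "r = sqrt (y\<^sup>2 + z\<^sup>2 + w\<^sup>2)"
  have im: "qimabs p = r" unfolding qimabs_def r_def p using bv by simp
  show ?thesis
  proof (cases "r = 0")
    case True
    then have "y = 0" "z = 0" "w = 0" unfolding r_def by (auto simp: add_nonneg_eq_0_iff)
    moreover have "Quat 0 1 0 0 \<in> qS" by (simp add: qS_def qabs_def)
    ultimately show ?thesis unfolding qsphere_def using im True ax
      by (intro CollectI exI[of _ "Quat 0 1 0 0"]) (simp add: p s of_real_quat times_quat_def zero_quat_def plus_quat_def)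
  next
    case False
    have "r \<ge> 0" unfolding r_def by simp
    with False have rp: "r > 0" by simp
    have r2: "r\<^sup>2 = y\<^sup>2 + z\<^sup>2 + w\<^sup>2" unfolding r_def by simp
    define J where "J = Quat 0 (y/r) (z/r) (w/r)"
    have "(y/r)\<^sup>2 + (z/r)\<^sup>2 + (w/r)\<^sup>2 = (y\<^sup>2 + z\<^sup>2 + w\<^sup>2) / r\<^sup>2"
      by (simp add: power_divide add_divide_distrib)
    also have "\<dots> = 1" using rp unfolding r2[symmetric] by simp
    finally have "(y/r)\<^sup>2 + (z/r)\<^sup>2 + (w/r)\<^sup>2 = 1" .
    then have "J \<in> qS" by (simp add: qS_def qabs_def J_def)
    moreover have "s = of_real (qre p) + of_real (qimabs p) * J"
      using rp unfolding im by (simp add: p s J_def ax of_real_quat quat_eq_iff times_quat_def plus_quat_def)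
    ultimately show ?thesis unfolding qsphere_def by blast
  qed
qed

theorem theorem6p4:
  fixes T0 T1 T2 T3 :: "'a::banach \<Rightarrow>\<^sub>L 'a" and s p :: quat
  assumes "BC T0 T1 T2 T3"
    and "s \<in> rhoS T0 T1 T2 T3" and "p \<in> rhoS T0 T1 T2 T3"
    and "s \<notin> qsphere p"
  defines "Tb \<equiv> qop T0 (- T1) (- T2) (- T3)"
    and "Qs \<equiv> inv (Qcs T0 T1 T2 T3 s)"
    and "Qp \<equiv> inv (Qcs T0 T1 T2 T3 p)"
    and "s0 \<equiv> qre s"
  shows "(lmul s \<circ> Qs \<circ> Qp \<circ> lmul p) - (lmul s \<circ> Qs \<circ> Tb \<circ> Qp) - (Qs \<circ> Tb \<circ> Qp \<circ> lmul p)
           + (Qs \<circ> Tb \<circ> Tb \<circ> Qp)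
       = (((((lmul s \<circ> Qs) - (lmul p \<circ> Qp)) \<circ> lmul p) - (lmul (qcnj s) \<circ> ((lmul s \<circ> Qs) - (lmul p \<circ> Qp))))
           \<circ> lmul (inverse (p * p - of_real (2 * s0) * p + of_real ((qabs s)\<^sup>2))))
         + (((((Tb \<circ> Qp) - (Qs \<circ> Tb)) \<circ> lmul p) - (lmul (qcnj s) \<circ> ((Tb \<circ> Qp) - (Qs \<circ> Tb))))
           \<circ> lmul (inverse (p * p - of_real (2 * s0) * p + of_real ((qabs s)\<^sup>2))))"
proof -
  let ?Tm = "qop T0 T1 T2 T3"
  have linTm: "linear ?Tm" and linTb: "linear Tb" unfolding Tb_def by (rule qop_linear)+
  from assms(2) obtain Bs where Bs: "bounded_linear Bs" "Bs \<circ> Qcs T0 T1 T2 T3 s = id"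
      "Qcs T0 T1 T2 T3 s \<circ> Bs = id" unfolding rhoS_def by blast
  from assms(3) obtain Bp where Bp: "bounded_linear Bp" "Bp \<circ> Qcs T0 T1 T2 T3 p = id"
      "Qcs T0 T1 T2 T3 p \<circ> Bp = id" unfolding rhoS_def by blast
  have QsB: "Qs = Bs" unfolding Qs_def using Bs by (metis inv_unique_comp)
  have QpB: "Qp = Bp" unfolding Qp_def using Bp by (metis inv_unique_comp)
  have linQs: "linear Qs" using QsB Bs bounded_linear.linear by blast
  have linQp: "linear Qp" using QpB Bp bounded_linear.linear by blast
  define qq where "qq = p * p - of_real (2 * s0) * p + of_real ((qabs s)\<^sup>2)"
  have qq0: "qq \<noteq> 0" using assms(4) sphere_lemma unfolding qq_def s0_def by blast
  define S where "S = (abs (lmul s) :: 'a qvec lop)"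
  define P where "P = (abs (lmul p) :: 'a qvec lop)"
  define Sc where "Sc = (abs (lmul (qcnj s)) :: 'a qvec lop)"
  define t where "t = (abs Tb :: 'a qvec lop)"
  define Tr where "Tr = (abs ?Tm :: 'a qvec lop)"
  define Qsr where "Qsr = (abs Qs :: 'a qvec lop)"
  define Qpr where "Qpr = (abs Qp :: 'a qvec lop)"
  define Qi where "Qi = (abs (lmul (inverse qq)) :: 'a qvec lop)"
  define c2 where "c2 = (abs (lmul (of_real (2 * s0))) :: 'a qvec lop)"
  define cn where "cn = (abs (lmul (of_real ((qabs s)\<^sup>2))) :: 'a qvec lop)"
  have rS: "rep S = lmul s" unfolding S_def by (simp add: rep_abs lmul_linear)
  have rP: "rep P = lmul p" unfolding P_def by (simp add: rep_abs lmul_linear)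
  have rSc: "rep Sc = lmul (qcnj s)" unfolding Sc_def by (simp add: rep_abs lmul_linear)
  have rt: "rep t = Tb" unfolding t_def by (simp add: rep_abs linTb)
  have rTr: "rep Tr = ?Tm" unfolding Tr_def by (simp add: rep_abs linTm)
  have rQs: "rep Qsr = Qs" unfolding Qsr_def by (simp add: rep_abs linQs)
  have rQp: "rep Qpr = Qp" unfolding Qpr_def by (simp add: rep_abs linQp)
  have rQi: "rep Qi = lmul (inverse qq)" unfolding Qi_def by (simp add: rep_abs lmul_linear)
  have rc2: "rep c2 = (\<lambda>x. (2 * s0) *\<^sub>R x)" unfolding c2_def by (subst rep_abs[OF lmul_linear]) (rule lmul_of_real)
  have rcn: "rep cn = (\<lambda>x. ((qabs s)\<^sup>2) *\<^sub>R x)" unfolding cn_def by (subst rep_abs[OF lmul_linear]) (rule lmul_of_real)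
  note rs = rS rP rSc rt rTr rQs rQp rQi
  define K where "K = S*S - S*(Tr+t) + Tr*t"
  define Kp where "Kp = P*P - P*(Tr+t) + Tr*t"
  have rK: "rep K = Qcs T0 T1 T2 T3 s"
    unfolding K_def Qcs_def Tb_def[symmetric]
    by (rule ext) (simp add: rep_plus rep_minus rep_times rs lmul_mult)
  have rKp: "rep Kp = Qcs T0 T1 T2 T3 p"
    unfolding Kp_def Qcs_def Tb_def[symmetric]
    by (rule ext) (simp add: rep_plus rep_minus rep_times rs lmul_mult)
  have QK: "Qsr*K = 1" "K*Qsr = 1"
    using Bs unfolding lop_eq rep_times rK rQs rep_1 QsB by (simp_all add: id_def)
  have QKp: "Qpr*Kp = 1" "Kp*Qpr = 1"
    using Bp unfolding lop_eq rep_times rKp rQp rep_1 QpB by (simp_all add: id_def)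
  have sumTT: "(\<lambda>x. ?Tm x + Tb x) = qop (T0 + T0) 0 0 0"
    using qop_sum[of T0 T1 T2 T3] unfolding Tb_def plus_fun_def .
  have prodTT: "?Tm \<circ> Tb = qop ((T0 o\<^sub>L T0) + (T1 o\<^sub>L T1) + (T2 o\<^sub>L T2) + (T3 o\<^sub>L T3)) 0 0 0"
      "Tb \<circ> ?Tm = qop ((T0 o\<^sub>L T0) + (T1 o\<^sub>L T1) + (T2 o\<^sub>L T2) + (T3 o\<^sub>L T3)) 0 0 0"
    using qop_prod[OF assms(1)] unfolding Tb_def by auto
  have cS: "S*(Tr+t) = (Tr+t)*S" "S*(Tr*t) = (Tr*t)*S"
    unfolding lop_eq rep_times rep_plus rs sumTT prodTT by (simp_all add: lmul_diag)
  have cP: "P*(Tr+t) = (Tr+t)*P" "P*(Tr*t) = (Tr*t)*P"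
    unfolding lop_eq rep_times rep_plus rs sumTT prodTT by (simp_all add: lmul_diag)
  have ct: "Tr*t = t*Tr" unfolding lop_eq rep_times rs prodTT ..
  have sc1: "Sc + S = c2" unfolding lop_eq rep_plus rs rc2
    unfolding lmul_add[of "qcnj s" s, symmetric] cnj_add[of s] lmul_of_real s0_def ..
  have sc2: "Sc * S = cn" unfolding lop_eq rep_times rs rcn
    unfolding lmul_mult[of "qcnj s" s, symmetric] cnj_mult[of s] lmul_of_real ..
  have cen1: "c2*x = x*c2" for x
    unfolding lop_eq rep_times rc2 by (rule ext) (simp add: real_vector.linear_scale rep_lin)
  have cen2: "cn*x = x*cn" for x
    unfolding lop_eq rep_times rcn by (rule ext) (simp add: real_vector.linear_scale rep_lin)
  have qP: "P*P - c2*P + cn = abs (lmul qq)"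
  proof -
    have "rep (P*P - c2*P + cn) = lmul qq"
      unfolding qq_def lmul_add lmul_diff lmul_mult lmul_of_real
      by (rule ext) (simp add: rep_plus rep_minus rep_times rs rc2 rcn)
    then show ?thesis by (metis rep_inverse)
  qed
  have qi: "(P*P - c2*P + cn)*Qi = 1"
    unfolding qP lop_eq rep_times rQi rep_1 by (simp add: rep_abs lmul_linear lmul_mult[symmetric] quat_right_inverse[OF qq0] lmul_one)
  have E: "S*Qsr*Qpr*P - S*Qsr*t*Qpr - Qsr*t*Qpr*P + Qsr*t*t*Qpr
     = ((S*Qsr - P*Qpr)*P - Sc*(S*Qsr - P*Qpr))*Qi + ((t*Qpr - Qsr*t)*P - Sc*(t*Qpr - Qsr*t))*Qi"
    by (rule ring_id[OF QK QKp K_def Kp_def cS cP ct sc1 sc2 cen1 cen2 qi])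
  then have "rep (S*Qsr*Qpr*P - S*Qsr*t*Qpr - Qsr*t*Qpr*P + Qsr*t*t*Qpr)
     = rep (((S*Qsr - P*Qpr)*P - Sc*(S*Qsr - P*Qpr))*Qi + ((t*Qpr - Qsr*t)*P - Sc*(t*Qpr - Qsr*t))*Qi)"
    by simp
  then show ?thesis unfolding qq_def[symmetric]
    by (simp only: rep_times rep_plus' rep_minus' rs)
qed

end
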